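(* The word problem for the Manturov group $G^2_3=\langle a,b,c\mid a^2=b^2=c^2=1,\ bca=acb,\ cab=bac,\ cba=abc\rangle$ is solvable.
   Context: $G^2_3$ is the Manturov $(2,3)$-group, with generators $a=a_{12}$, $b=a_{13}$, $c=a_{23}$; each generator is an involution, so every element is represented by a positive word in $a,b,c$. *)

theory Defs
  imports Main
begin

datatype gen = A | B | C   (* A = a_12, B = a_13, C = a_23 *)

type_synonym word = "gen list"

definition rels :: "(word \<times> word) set" where
  "rels = {([A,A],[]), ([B,B],[]), ([C,C],[]),
           ([B,C,A],[A,C,B]), ([C,A,B],[B,A,C]), ([C,B,A],[A,B,C])}"

text \<open>Equality in the group: the congruence on positive words generated by the relations
 (since every generator is an involution, the monoid presentation gives the group).\<close>
inductive weq :: "word \<Rightarrow> word \<Rightarrow> bool" where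
  weq_refl: "weq w w"
| weq_sym: "weq u v \<Longrightarrow> weq v u"
| weq_trans: "weq u v \<Longrightarrow> weq v w \<Longrightarrow> weq u w"
| weq_rel: "(l, r) \<in> rels \<Longrightarrow> weq (u @ l @ v) (u @ r @ v)"

datatype recf = Z | S | Id nat | Cn recf "recf list" | Pr recf recf | Mn recf

inductive eval :: "recf \<Rightarrow> nat list \<Rightarrow> nat \<Rightarrow> bool" where
  eval_Z: "eval Z xs 0"
| eval_S: "eval S (x # xs) (Suc x)"
| eval_Id: "i < length xs \<Longrightarrow> eval (Id i) xs (xs ! i)"
| eval_Cn: "list_all2 (\<lambda>g y. eval g xs y) gs ys \<Longrightarrow> eval f ys z \<Longrightarrow> eval (Cn f gs) xs z"
| eval_Pr0: "eval f xs z \<Longrightarrow> eval (Pr f g) (0 # xs) z"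
| eval_PrS: "eval (Pr f g) (n # xs) y \<Longrightarrow> eval g (n # y # xs) z \<Longrightarrow> eval (Pr f g) (Suc n # xs) z"
| eval_Mn: "eval f (n # xs) 0 \<Longrightarrow> (\<forall>m<n. \<exists>y. eval f (m # xs) y \<and> 0 < y) \<Longrightarrow> eval (Mn f) xs n"
monos list_all2_mono

text \<open>Injective encoding of words as natural numbers (base-4 digits 1,2,3).\<close>
fun gen_code :: "gen \<Rightarrow> nat" where
  "gen_code A = 1" | "gen_code B = 2" | "gen_code C = 3"

fun enc :: "word \<Rightarrow> nat" where
  "enc [] = 0"
| "enc (x # xs) = gen_code x + 4 * enc xs"

end

theory Submission
  imports Defs
begin


lemma weq_ctx: "weq u v \<Longrightarrow> weq (p @ u @ q) (p @ v @ q)"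
proof (induction rule: weq.induct)
  case (weq_refl w) then show ?case by (rule weq.weq_refl)
next
  case (weq_sym u v) show ?case using weq_sym.IH by (rule weq.weq_sym)
next
  case (weq_trans u v w) then show ?case by (metis weq.weq_trans)
next
  case (weq_rel l r u v)
  have "weq ((p @ u) @ l @ (v @ q)) ((p @ u) @ r @ (v @ q))" by (rule weq.weq_rel[OF weq_rel])
  then show ?case by simp
qed

lemma weq_cons: "weq u v \<Longrightarrow> weq (x # u) (x # v)"
  using weq_ctx[of u v "[x]" "[]"] by simp

lemma rel_pre: "(l, r) \<in> rels \<Longrightarrow> weq (p @ l @ v) (p @ r @ v)"
  by (rule weq.weq_rel)

lemma rel_front: "(l, r) \<in> rels \<Longrightarrow> weq (l @ v) (r @ v)"
  using weq.weq_rel[of l r "[]" v] by simp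

lemma sq: "weq (x # x # v) v"
proof -
  have "([x,x],[]) \<in> rels" by (cases x) (auto simp: rels_def)
  from rel_front[OF this, of v] show ?thesis by simp
qed

lemma sq2: "weq (y # x # x # v) (y # v)"
  using weq_cons[OF sq] .

lemma swap: "weq (a # b # c # r) (c # b # a # r)"
proof -
  consider "a = c" | "a \<noteq> c" "b = a" | "a \<noteq> c" "b = c" | "a \<noteq> c" "b \<noteq> a" "b \<noteq> c" by blast
  then show ?thesis
  proof cases
    case 1 then show ?thesis by (simp add: weq_refl)
  next
    case 2 then show ?thesis using sq[of a "c # r"] sq2[of c a r]
      by (metis weq_sym weq_trans)
  next
    case 3 then show ?thesis using sq2[of a c r] sq[of c "a # r"]
      by (metis weq_sym weq_trans)
  next
    case 4
    then have "([a,b,c],[c,b,a]) \<in> rels \<or> ([c,b,a],[a,b,c]) \<in> rels"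
      by (cases a; cases b; cases c) (auto simp: rels_def)
    then show ?thesis using rel_front[of "[a,b,c]" "[c,b,a]" r] rel_front[of "[c,b,a]" "[a,b,c]" r]
      by (auto intro: weq_sym)
  qed
qed

fun cnt :: "bool \<Rightarrow> gen \<Rightarrow> word \<Rightarrow> nat" where
  "cnt e x [] = 0"
| "cnt e x (y # ys) = (if e \<and> y = x then 1 else 0) + cnt (\<not> e) x ys"

lemma cnt_append: "cnt e x (u @ v) = cnt e x u + cnt (if even (length u) then e else \<not> e) x v"
  by (induction u arbitrary: e) auto

lemma cnt_le: "cnt e x w \<le> length w"
  by (induction w arbitrary: e) (auto intro: le_SucI)

definition sig :: "word \<Rightarrow> gen \<Rightarrow> int" where
  "sig w x = int (cnt True x w) - int (cnt False x w)"

lemma sig_rel: assumes "(l, r) \<in> rels" shows "sig (u @ l @ v) x = sig (u @ r @ v) x"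
  using assms unfolding rels_def sig_def
  by (cases "even (length u)"; cases x) (auto simp: cnt_append)

lemma weq_sig: "weq u v \<Longrightarrow> sig u x = sig v x"
  by (induction rule: weq.induct) (auto simp: sig_rel)

lemma move: "cnt True x w \<ge> 1 \<Longrightarrow> \<exists>r. weq w (x # r) \<and> length r + 1 = length w \<and> (\<forall>e y. cnt e y (x # r) = cnt e y w)"
proof (induction w rule: induct_list012)
  case 1 then show ?case by simp
next
  case (2 p) then show ?case by (auto intro: weq_refl split: if_splits)
next
  case (3 p0 p1 rest)
  show ?case
  proof (cases "p0 = x")
    case True then show ?thesis by (auto intro!: exI[of _ "p1 # rest"] weq_refl)
  next
    case False
    with 3(3) have "cnt True x rest \<ge> 1" by simp
    from 3(1)[OF this] obtain r' where r': "weq rest (x # r')" "length r' + 1 = length rest"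
      "\<forall>e y. cnt e y (x # r') = cnt e y rest" by blast
    have "weq (p0 # p1 # rest) (p0 # p1 # x # r')" using weq_cons[OF weq_cons[OF r'(1)]] .
    then have w: "weq (p0 # p1 # rest) (x # p1 # p0 # r')" using swap weq_trans by blast
    show ?thesis
      apply (rule exI[of _ "p1 # p0 # r'"])
      using w r' by auto
  qed
qed

lemma weq_nil_if: "(\<forall>x. cnt True x w = cnt False x w) \<Longrightarrow> weq w []"
proof (induction w rule: length_induct)
  case (1 w)
  show ?case
  proof (cases w)
    case Nil then show ?thesis by (simp add: weq_refl)
  next
    case (Cons x w')
    from "1.prems" Cons have "cnt True x (x # w') = cnt False x (x # w')" by blast
    then have "cnt True x w' \<ge> 1" by simp
    from move[OF this] obtain r where r: "weq w' (x # r)" "length r + 1 = length w'"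
      "\<forall>e y. cnt e y (x # r) = cnt e y w'" by blast
    have "weq w (x # x # r)" using Cons weq_cons[OF r(1)] by simp
    then have wr: "weq w r" using sq weq_trans by blast
    have "\<forall>y. cnt True y r = cnt False y r"
    proof
      fix y
      have a: "cnt True y (x # w') = cnt False y (x # w')"
        using "1.prems" Cons by blast
      have b1: "cnt True y (x # r) = cnt True y w'" and b2: "cnt False y (x # r) = cnt False y w'"
        using r(3) by blast+
      show "cnt True y r = cnt False y r" using a b1 b2 by simp
    qed
    moreover have "length r < length w" using Cons r(2) by simp
    ultimately have "weq r []" using "1.IH" by blast
    then show ?thesis using wr weq_trans by blast
  qed
qed

lemma weq_nil_iff: "weq w [] \<longleftrightarrow> (\<forall>x. cnt True x w = cnt False x w)"
proof
  assume "weq w []"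
  then have "sig w x = sig [] x" for x by (rule weq_sig)
  then show "\<forall>x. cnt True x w = cnt False x w" by (simp add: sig_def)
qed (rule weq_nil_if)



definition rc :: "nat \<Rightarrow> recf \<Rightarrow> (nat list \<Rightarrow> nat) \<Rightarrow> bool" where
  "rc k f F \<longleftrightarrow> (\<forall>xs y. length xs = k \<longrightarrow> (eval f xs y \<longleftrightarrow> y = F xs))"

inductive_cases evZ: "eval Z xs y"
inductive_cases evS: "eval S xs y"
inductive_cases evId: "eval (Id i) xs y"
inductive_cases evCn: "eval (Cn f gs) xs y"
inductive_cases evPr0: "eval (Pr f g) (0 # xs) y"
inductive_cases evPrS: "eval (Pr f g) (Suc n # xs) y"

lemma rc_Z: "rc k Z (\<lambda>_. 0)"
  unfolding rc_def by (auto intro: eval.intros elim: evZ)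

lemma rc_S: "rc 1 S (\<lambda>xs. Suc (xs ! 0))"
  unfolding rc_def by (auto simp: length_Suc_conv intro: eval.intros elim: evS)

lemma rc_Id: "i < k \<Longrightarrow> rc k (Id i) (\<lambda>xs. xs ! i)"
  unfolding rc_def by (auto intro: eval.intros elim: evId)

lemma rc_Cn:
  assumes f: "rc (length gs) f F" and gs: "list_all2 (\<lambda>g G. rc k g G) gs Gs"
    and H: "\<And>xs. length xs = k \<Longrightarrow> H xs = F (map (\<lambda>G. G xs) Gs)"
  shows "rc k (Cn f gs) H"
  unfolding rc_def
proof (intro allI impI)
  fix xs :: "nat list" and y assume len: "length xs = k"
  have l: "list_all2 (\<lambda>g y. eval g xs y) gs ys \<longleftrightarrow> ys = map (\<lambda>G. G xs) Gs" for ys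
  proof -
    have lg: "length Gs = length gs" using gs by (simp add: list_all2_lengthD)
    have c: "\<And>i. i < length gs \<Longrightarrow> rc k (gs ! i) (Gs ! i)" using gs by (simp add: list_all2_conv_all_nth)
    show ?thesis
      unfolding list_all2_conv_all_nth
      using c len lg unfolding rc_def by (auto intro: nth_equalityI)
  qed
  show "eval (Cn f gs) xs y \<longleftrightarrow> y = H xs"
  proof
    assume "eval (Cn f gs) xs y"
    then obtain ys where "list_all2 (\<lambda>g y. eval g xs y) gs ys" "eval f ys y" by (auto elim: evCn)
    then show "y = H xs" using l f H[OF len] gs unfolding rc_def by (auto dest: list_all2_lengthD)
  next
    assume "y = H xs"
    then have "eval f (map (\<lambda>G. G xs) Gs) y" using f H[OF len] gs unfolding rc_def by (auto dest: list_all2_lengthD)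
    moreover have "list_all2 (\<lambda>g y. eval g xs y) gs (map (\<lambda>G. G xs) Gs)" using l by simp
    ultimately show "eval (Cn f gs) xs y" by (auto intro: eval.intros)
  qed
qed

lemma rc_Pr:
  assumes f: "rc k f F" and g: "rc (Suc (Suc k)) g G"
    and H0: "\<And>xs. length xs = k \<Longrightarrow> H (0 # xs) = F xs"
    and HS: "\<And>n xs. length xs = k \<Longrightarrow> H (Suc n # xs) = G (n # H (n # xs) # xs)"
  shows "rc (Suc k) (Pr f g) H"
  unfolding rc_def
proof (intro allI impI)
  fix xs0 :: "nat list" and y assume "length xs0 = Suc k"
  then obtain n xs where xs0: "xs0 = n # xs" and len: "length xs = k" by (auto simp: length_Suc_conv)
  have "\<forall>y. eval (Pr f g) (n # xs) y \<longleftrightarrow> y = H (n # xs)"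
  proof (induction n)
    case 0 show ?case using f H0[OF len] len unfolding rc_def by (auto intro: eval.intros elim: evPr0)
  next
    case (Suc n)
    show ?case
    proof (intro allI iffI)
      fix y assume "eval (Pr f g) (Suc n # xs) y"
      then obtain z where "eval (Pr f g) (n # xs) z" "eval g (n # z # xs) y" by (auto elim: evPrS)
      then show "y = H (Suc n # xs)" using Suc.IH g HS[OF len] len unfolding rc_def by auto
    next
      fix y assume "y = H (Suc n # xs)"
      then have "eval g (n # H (n # xs) # xs) y" using g HS[OF len] len unfolding rc_def by auto
      moreover have "eval (Pr f g) (n # xs) (H (n # xs))" using Suc.IH by simp
      ultimately show "eval (Pr f g) (Suc n # xs) y" by (auto intro: eval.intros)
    qed
  qed
  then show "eval (Pr f g) xs0 y \<longleftrightarrow> y = H xs0" using xs0 by simp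
qed

lemma rc_cong: "rc k f F \<Longrightarrow> (\<And>xs. length xs = k \<Longrightarrow> F xs = F' xs) \<Longrightarrow> rc k f F'"
  unfolding rc_def by auto

lemma rc_Pr2:
  assumes "rc k f F" "rc (Suc (Suc k)) g G" "k' = Suc k"
    "\<And>xs. length xs = k \<Longrightarrow> H (0 # xs) = F xs"
    "\<And>n xs. length xs = k \<Longrightarrow> H (Suc n # xs) = G (n # H (n # xs) # xs)"
  shows "rc k' (Pr f g) H"
  using rc_Pr[OF assms(1,2,4,5)] assms(3) by simp

lemma rc_Cn2:
  assumes "rc m f F" "length gs = m" "list_all2 (\<lambda>g G. rc k g G) gs Gs"
    "\<And>xs. length xs = k \<Longrightarrow> H xs = F (map (\<lambda>G. G xs) Gs)"
  shows "rc k (Cn f gs) H"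
  using rc_Cn[of gs f F k Gs H] assms by simp

lemma rc_C1: "rc (Suc 0) f F \<Longrightarrow> rc k g1 G1 \<Longrightarrow> rc k (Cn f [g1]) (\<lambda>xs. F [G1 xs])"
  by (rule rc_Cn2) auto

lemma rc_C2: "rc 2 f F \<Longrightarrow> rc k g1 G1 \<Longrightarrow> rc k g2 G2 \<Longrightarrow> rc k (Cn f [g1, g2]) (\<lambda>xs. F [G1 xs, G2 xs])"
  by (rule rc_Cn2[where m=2]) auto

lemma rc_S1: "rc (Suc 0) S (\<lambda>xs. Suc (xs ! 0))"
  using rc_S by simp

primrec cst :: "nat \<Rightarrow> recf" where
  "cst 0 = Z" | "cst (Suc c) = Cn S [cst c]"

lemma rc_cst: "rc k (cst c) (\<lambda>_. c)"
  by (induction c) (auto simp: rc_Z dest: rc_C1[OF rc_S1])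

declare cst.simps[simp del]

definition "addf = Pr (Id 0) (Cn S [Id 1])"
lemma rc_add: "rc 2 addf (\<lambda>xs. xs!0 + xs!1)"
  unfolding addf_def
  by (rule rc_Pr2[OF rc_Id rc_C1[OF rc_S1 rc_Id]]) auto

definition "mulf = Pr Z (Cn addf [Id 1, Id 2])"
lemma rc_mul: "rc 2 mulf (\<lambda>xs. xs!0 * xs!1)"
  unfolding mulf_def
  by (rule rc_Pr2[OF rc_Z rc_C2[OF rc_add rc_Id rc_Id]]) auto

definition "predf = Pr Z (Id 0)"
lemma rc_pred: "rc 1 predf (\<lambda>xs. xs!0 - 1)"
  unfolding predf_def
  by (rule rc_Pr2[OF rc_Z rc_Id]) auto

definition "subrf = Pr (Id 0) (Cn predf [Id 1])"
lemma rc_subr: "rc 2 subrf (\<lambda>xs. xs!1 - xs!0)"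
  unfolding subrf_def
  by (rule rc_Pr2[OF rc_Id rc_C1[OF rc_pred[simplified] rc_Id]]) auto

definition "subf = Cn subrf [Id 1, Id 0]"
lemma rc_sub: "rc 2 subf (\<lambda>xs. xs!0 - xs!1)"
  unfolding subf_def
  by (rule rc_cong[OF rc_C2[OF rc_subr rc_Id rc_Id]]) auto

definition "eqf = Cn subf [cst 1, Cn addf [subf, Cn subf [Id 1, Id 0]]]"
lemma rc_eq: "rc 2 eqf (\<lambda>xs. if xs!0 = xs!1 then 1 else 0)"
  unfolding eqf_def
  by (rule rc_cong[OF rc_C2[OF rc_sub rc_cst rc_C2[OF rc_add rc_sub rc_C2[OF rc_sub rc_Id rc_Id]]]]) auto

lemma m4: "Suc n mod 4 = (if n mod 4 = 3 then 0 else Suc (n mod 4))"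
  by presburger

lemma d4: "Suc n div 4 = (if n mod 4 = 3 then Suc (n div 4) else n div 4)"
  by presburger

lemma q4: "(x::nat) div 4 ^ Suc n = x div 4 ^ n div 4"
  by (simp add: div_mult2_eq power_Suc2 del: power_Suc)

definition "mod4f = Pr Z (Cn mulf [Cn S [Id 1], Cn subf [cst 1, Cn eqf [Id 1, cst 3]]])"
lemma rc_mod4: "rc 1 mod4f (\<lambda>xs. xs!0 mod 4)"
  unfolding mod4f_def
  by (rule rc_Pr2[OF rc_Z rc_C2[OF rc_mul rc_C1[OF rc_S1 rc_Id] rc_C2[OF rc_sub rc_cst rc_C2[OF rc_eq rc_Id rc_cst]]]])
    (auto simp: m4 simp del: mod_Suc)

definition "div4f = Pr Z (Cn addf [Id 1, Cn eqf [Cn mod4f [Id 0], cst 3]])"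
lemma rc_div4: "rc 1 div4f (\<lambda>xs. xs!0 div 4)"
  unfolding div4f_def
  by (rule rc_Pr2[OF rc_Z rc_C2[OF rc_add rc_Id rc_C2[OF rc_eq rc_C1[OF rc_mod4[simplified] rc_Id] rc_cst]]])
    (auto simp: d4 simp del: div_Suc)

definition "qf = Pr (Id 0) (Cn div4f [Id 1])"
lemma rc_q: "rc 2 qf (\<lambda>xs. xs!1 div 4 ^ (xs!0))"
  unfolding qf_def
  by (rule rc_Pr2[OF rc_Id rc_C1[OF rc_div4[simplified] rc_Id]]) (auto simp: q4 simp del: power_Suc)

definition "evf = Pr (cst 1) (Cn subf [cst 1, Id 1])"
lemma rc_ev: "rc 1 evf (\<lambda>xs. if even (xs!0) then 1 else 0)"
  unfolding evf_def
  by (rule rc_Pr2[OF rc_cst rc_C2[OF rc_sub rc_cst rc_Id]]) auto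

definition gv :: "nat \<Rightarrow> nat \<Rightarrow> nat" where
  "gv N d = (if d = 1 then 1 else 0) + ((if d = 2 then 1 else 0) * N + (if d = 3 then 1 else 0) * (N * N))"

definition "digf = Cn mod4f [qf]"
definition "Nf = Cn S [Id 1]"
definition "gvf = Cn addf [Cn eqf [digf, cst 1], Cn addf [Cn mulf [Cn eqf [digf, cst 2], Nf], Cn mulf [Cn eqf [digf, cst 3], Cn mulf [Nf, Nf]]]]"

lemma rc_dig: "rc 2 digf (\<lambda>xs. xs!1 div 4 ^ (xs!0) mod 4)"
  unfolding digf_def by (rule rc_cong[OF rc_C1[OF rc_mod4[simplified] rc_q]]) auto

lemma rc_N: "rc 2 Nf (\<lambda>xs. Suc (xs!1))"
  unfolding Nf_def by (rule rc_cong[OF rc_C1[OF rc_S1 rc_Id]]) auto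

lemma rc_gv: "rc 2 gvf (\<lambda>xs. gv (Suc (xs!1)) (xs!1 div 4 ^ (xs!0) mod 4))"
  unfolding gvf_def
  by (rule rc_cong[OF rc_C2[OF rc_add rc_C2[OF rc_eq rc_dig rc_cst]
        rc_C2[OF rc_add rc_C2[OF rc_mul rc_C2[OF rc_eq rc_dig rc_cst] rc_N]
                        rc_C2[OF rc_mul rc_C2[OF rc_eq rc_dig rc_cst] rc_C2[OF rc_mul rc_N rc_N]]]]])
    (auto simp: gv_def)

definition "tEf = Cn mulf [Cn evf [Id 0], gvf]"
definition "tOf = Cn mulf [Cn subf [cst 1, Cn evf [Id 0]], gvf]"

definition tE :: "nat \<Rightarrow> nat \<Rightarrow> nat" where
  "tE i n = (if even i then gv (Suc n) (n div 4 ^ i mod 4) else 0)"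
definition tO :: "nat \<Rightarrow> nat \<Rightarrow> nat" where
  "tO i n = (if odd i then gv (Suc n) (n div 4 ^ i mod 4) else 0)"

lemma rc_tE: "rc 2 tEf (\<lambda>xs. tE (xs!0) (xs!1))"
  unfolding tEf_def
  by (rule rc_cong[OF rc_C2[OF rc_mul rc_C1[OF rc_ev[simplified] rc_Id] rc_gv]]) (auto simp: tE_def)

lemma rc_tO: "rc 2 tOf (\<lambda>xs. tO (xs!0) (xs!1))"
  unfolding tOf_def
  by (rule rc_cong[OF rc_C2[OF rc_mul rc_C2[OF rc_sub rc_cst rc_C1[OF rc_ev[simplified] rc_Id]] rc_gv]]) (auto simp: tO_def)

definition "sumf t = Pr Z (Cn addf [Id 1, Cn t [Id 0, Id 2]])"
lemma rc_sum: assumes a: "rc 2 t T" shows "rc 2 (sumf t) (\<lambda>xs. \<Sum>i<xs!0. T [i, xs!1])"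
  unfolding sumf_def
  by (rule rc_Pr2[OF rc_Z rc_C2[OF rc_add rc_Id rc_C2[OF a rc_Id rc_Id]]]) auto

definition "finf = Cn eqf [Cn (sumf tEf) [Id 0, Id 0], Cn (sumf tOf) [Id 0, Id 0]]"
lemma rc_fin: "rc 1 finf (\<lambda>xs. if (\<Sum>i<xs!0. tE i (xs!0)) = (\<Sum>i<xs!0. tO i (xs!0)) then 1 else 0)"
  unfolding finf_def
  by (rule rc_cong[OF rc_C2[OF rc_eq rc_C2[OF rc_sum[OF rc_tE] rc_Id rc_Id] rc_C2[OF rc_sum[OF rc_tO] rc_Id rc_Id]]]) auto



lemma enc_ge: "length w \<le> enc w"
proof (induction w)
  case (Cons x w) then show ?case by (cases x) auto
qed simp

lemma code_lt: "gen_code x < 4" "gen_code x > 0" by (cases x; simp)+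

lemma digit: "enc w div 4 ^ i mod 4 = (if i < length w then gen_code (w ! i) else 0)"
proof (induction w arbitrary: i)
  case Nil then show ?case by simp
next
  case (Cons x w)
  show ?case
  proof (cases i)
    case 0 then show ?thesis using code_lt[of x] by simp
  next
    case (Suc j)
    have "enc (x # w) div 4 ^ i = (gen_code x + 4 * enc w) div 4 div 4 ^ j"
      using Suc by (simp add: div_mult2_eq)
    also have "(gen_code x + 4 * enc w) div 4 = enc w" using code_lt[of x] by simp
    finally show ?thesis using Cons.IH[of j] Suc by simp
  qed
qed

definition Sg :: "bool \<Rightarrow> nat \<Rightarrow> word \<Rightarrow> nat" where
  "Sg e N w = (\<Sum>i<length w. if even i = e then gv N (gen_code (w ! i)) else 0)"

lemma odd_eq: "(odd i = e) = (even i = (\<not> e))" by auto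

lemma Sg_cnt: "Sg e N w = cnt e A w + cnt e B w * N + cnt e C w * (N * N)"
proof (induction w arbitrary: e)
  case Nil then show ?case by (simp add: Sg_def)
next
  case (Cons x w)
  have "Sg e N (x # w) = (if e then gv N (gen_code x) else 0) + Sg (\<not> e) N w"
    unfolding Sg_def by (simp add: sum.lessThan_Suc_shift odd_eq del: sum.lessThan_Suc cong: if_cong)
  then show ?case using Cons.IH[of "\<not> e"] by (cases x) (auto simp: gv_def algebra_simps)
qed

lemma sum_red:
  fixes m n :: nat
  assumes "\<And>i. i \<ge> m \<Longrightarrow> i < n \<Longrightarrow> f i = (0::nat)" "m \<le> n"
  shows "(\<Sum>i<n. f i) = (\<Sum>i<m. f i)"
proof (rule sum.mono_neutral_right)
  show "\<forall>i\<in>{..<n} - {..<m}. f i = 0"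
  proof
    fix i assume "i \<in> {..<n} - {..<m}"
    then have "m \<le> i" "i < n" by auto
    then show "f i = 0" using assms(1) by blast
  qed
qed (use assms(2) in auto)

lemma sumE: "(\<Sum>i<enc w. tE i (enc w)) = Sg True (Suc (enc w)) w"
proof -
  have "(\<Sum>i<enc w. tE i (enc w)) = (\<Sum>i<length w. tE i (enc w))"
    by (rule sum_red) (auto simp: tE_def digit gv_def enc_ge)
  also have "\<dots> = Sg True (Suc (enc w)) w" unfolding Sg_def tE_def by (rule sum.cong) (auto simp: digit)
  finally show ?thesis .
qed

lemma sumO: "(\<Sum>i<enc w. tO i (enc w)) = Sg False (Suc (enc w)) w"
proof -
  have "(\<Sum>i<enc w. tO i (enc w)) = (\<Sum>i<length w. tO i (enc w))"
    by (rule sum_red) (auto simp: tO_def digit gv_def enc_ge)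
  also have "\<dots> = Sg False (Suc (enc w)) w" unfolding Sg_def tO_def by (rule sum.cong) (auto simp: digit)
  finally show ?thesis .
qed

lemma digits2: "(a::nat) < N \<Longrightarrow> a' < N \<Longrightarrow> a + b * N = a' + b' * N \<Longrightarrow> a = a' \<and> b = b'"
proof -
  assume h: "a < N" "a' < N" "a + b * N = a' + b' * N"
  have m: "(a + b * N) mod N = a" "(a' + b' * N) mod N = a'" using h(1,2) by simp_all
  have d: "(a + b * N) div N = b" "(a' + b' * N) div N = b'" using h(1,2) by simp_all
  have "a = (a + b * N) mod N" using m by simp
  also have "\<dots> = (a' + b' * N) mod N" using h(3) by simp
  also have "\<dots> = a'" using m by simp
  finally have "a = a'" .
  have "b = (a + b * N) div N" using d by simp
  also have "\<dots> = (a' + b' * N) div N" using h(3) by simp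
  also have "\<dots> = b'" using d by simp
  finally have "b = b'" .
  with \<open>a = a'\<close> show ?thesis by simp
qed

lemma digits3: "(a::nat) < N \<Longrightarrow> a' < N \<Longrightarrow> b < N \<Longrightarrow> b' < N \<Longrightarrow>
   a + b * N + c * (N * N) = a' + b' * N + c' * (N * N) \<Longrightarrow> a = a' \<and> b = b' \<and> c = c'"
proof -
  assume h: "a < N" "a' < N" "b < N" "b' < N" "a + b * N + c * (N * N) = a' + b' * N + c' * (N * N)"
  then have "a + (b + c * N) * N = a' + (b' + c' * N) * N" by (simp add: algebra_simps)
  from digits2[OF h(1,2) this] have "a = a'" "b + c * N = b' + c' * N" by auto
  with digits2[OF h(3,4) this(2)] show ?thesis by simp
qed

lemma key: "((\<Sum>i<enc w. tE i (enc w)) = (\<Sum>i<enc w. tO i (enc w))) \<longleftrightarrow> weq w []"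
proof -
  let ?N = "Suc (enc w)"
  have lt: "cnt e x w < ?N" for e x using cnt_le[of e x w] enc_ge[of w] by simp
  have "Sg True ?N w = Sg False ?N w \<longleftrightarrow> (\<forall>x. cnt True x w = cnt False x w)"
  proof
    assume "Sg True ?N w = Sg False ?N w"
    then have "cnt True A w = cnt False A w \<and> cnt True B w = cnt False B w \<and> cnt True C w = cnt False C w"
      unfolding Sg_cnt by (rule digits3[OF lt lt lt lt])
    then show "\<forall>x. cnt True x w = cnt False x w" by (metis gen.exhaust)
  qed (simp add: Sg_cnt)
  then show ?thesis by (simp add: sumE sumO weq_nil_iff)
qed

theorem mainTheorem10:
  shows "\<exists>f :: recf. \<forall>w :: word. \<forall>y. eval f [enc w] y \<longleftrightarrow> y = (if weq w [] then 1 else 0)"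
proof (intro exI allI)
  fix w y
  have "eval finf [enc w] y \<longleftrightarrow> y = (if (\<Sum>i<enc w. tE i (enc w)) = (\<Sum>i<enc w. tO i (enc w)) then 1 else 0)"
    using rc_fin unfolding rc_def by (metis One_nat_def length_Cons list.size(3) nth_Cons_0)
  then show "eval finf [enc w] y \<longleftrightarrow> y = (if weq w [] then 1 else 0)" by (simp add: key)
qed

end
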